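(* The functor $\epsilon:\mathcal{T}_q\to\mathcal{E}^f$ is full: for any two finite-dimensional non-degenerate quadratic spaces $V,W$ over $\mathbb{F}_2$ and any linear map $f:V\to W$ of underlying vector spaces, there exists a morphism $T\in\mathrm{Hom}_{\mathcal{T}_q}(V,W)$ of the form $T=[V\xrightarrow{\varphi}W\perp Y\hookleftarrow W]$ with $\epsilon(T)=f$.
   Context: All vector spaces are over $\mathbb{F}_2$; $\mathcal{E}^f$ is the category of finite-dimensional vector spaces. A quadratic form on $V$ is $q:V\to\mathbb{F}_2$ with $B(x,y)=q(x+y)+q(x)+q(y)$ bilinear; non-degenerate means $B$ has trivial radical. $\mathcal{E}_q$: objects non-degenerate finite-dimensional quadratic spaces, morphisms linear maps preserving $q$. Pseudo push-out of $f:V\to W=f(V)\perp V'$ and $g:V\to X=g(V)\perp V''$: the space $V\perp V'\perp V''$ with maps $f(v)+v'\mapsto v+v'$ and $g(v)+v''\mapsto v+v''$. $\mathcal{T}_q$: same objects as $\mathcal{E}_q$; morphisms $V\to W$ are classes of diagrams $[V\xrightarrow{f}X\xleftarrow{g}W]$ in $\mathcal{E}_q$ modulo the equivalence relation generated by existence of an $\mathcal{E}_q$-morphism $X_1\to X_2$ compatible with both legs; composition uses the pseudo push-out. $\epsilon:\mathcal{T}_q\to\mathcal{E}^f$ is the identity on underlying spaces and sends $[V\xrightarrow{f}X\xleftarrow{g}W]$ to $p_g\circ f$, where $p_g:X=g(W)\perp g(W)^\perp\to W$ is orthogonal projection onto $g(W)$ followed by $g^{-1}$. *)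

theory Defs
  imports Main "HOL-Library.Z2" "HOL-Library.Function_Algebras" "HOL-Library.Product_Plus"
begin

text \<open>Finite-dimensional vector spaces over F2, presented as carrier sets S inside an
  ambient abelian group: a subset containing 0, closed under addition, with x + x = 0
  (scalar multiplication by 0 and 1 is then determined). Finite-dimensional over F2
  is the same as finite.\<close>

definition f2space :: "'a::ab_group_add set \<Rightarrow> bool" where
  "f2space S \<longleftrightarrow> 0 \<in> S \<and> (\<forall>x\<in>S. \<forall>y\<in>S. x + y \<in> S) \<and> (\<forall>x\<in>S. x + x = 0) \<and> finite S"

definition f2linear :: "'a::ab_group_add set \<Rightarrow> 'b::ab_group_add set \<Rightarrow> ('a \<Rightarrow> 'b) \<Rightarrow> bool" where
  "f2linear S T f \<longleftrightarrow> (\<forall>x\<in>S. f x \<in> T) \<and> (\<forall>x\<in>S. \<forall>y\<in>S. f (x + y) = f x + f y)"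

definition polar :: "('a::ab_group_add \<Rightarrow> bit) \<Rightarrow> 'a \<Rightarrow> 'a \<Rightarrow> bit" where
  "polar q x y = q (x + y) + q x + q y"

definition quadratic_form :: "'a::ab_group_add set \<Rightarrow> ('a \<Rightarrow> bit) \<Rightarrow> bool" where
  "quadratic_form S q \<longleftrightarrow> f2space S \<and>
     (\<forall>x\<in>S. \<forall>y\<in>S. \<forall>z\<in>S. polar q (x + y) z = polar q x z + polar q y z) \<and>
     (\<forall>x\<in>S. \<forall>y\<in>S. \<forall>z\<in>S. polar q x (y + z) = polar q x y + polar q x z)"

definition nondegenerate :: "'a::ab_group_add set \<Rightarrow> ('a \<Rightarrow> bit) \<Rightarrow> bool" where
  "nondegenerate S q \<longleftrightarrow> (\<forall>x\<in>S. (\<forall>y\<in>S. polar q x y = 0) \<longrightarrow> x = 0)"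

definition quad_space :: "'a::ab_group_add set \<Rightarrow> ('a \<Rightarrow> bit) \<Rightarrow> bool" where
  "quad_space S q \<longleftrightarrow> quadratic_form S q \<and> nondegenerate S q"

definition Eq_morphism :: "'a::ab_group_add set \<Rightarrow> ('a \<Rightarrow> bit) \<Rightarrow> 'b::ab_group_add set \<Rightarrow> ('b \<Rightarrow> bit) \<Rightarrow> ('a \<Rightarrow> 'b) \<Rightarrow> bool" where
  "Eq_morphism S q T r f \<longleftrightarrow> f2linear S T f \<and> (\<forall>x\<in>S. r (f x) = q x)"

definition orth_form :: "('a \<Rightarrow> bit) \<Rightarrow> ('b \<Rightarrow> bit) \<Rightarrow> 'a \<times> 'b \<Rightarrow> bit" where
  "orth_form qW qY p = qW (fst p) + qY (snd p)"

text \<open>p_g : X = g(W) \<perp> g(W)^\<perp> \<rightarrow> W, orthogonal projection onto g(W) followed by g^-1: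
  p_g x is the unique w in W with x - g w orthogonal (w.r.t. the polar form of X) to g(W).\<close>
definition proj_g :: "('x::ab_group_add \<Rightarrow> bit) \<Rightarrow> 'w set \<Rightarrow> ('w \<Rightarrow> 'x) \<Rightarrow> 'x \<Rightarrow> 'w" where
  "proj_g qX W g x = (THE w. w \<in> W \<and> (\<forall>u\<in>W. polar qX (x - g w) (g u) = 0))"

text \<open>The functor epsilon on a representative diagram [V -f-> X <-g- W]: p_g \<circ> f.\<close>
definition eps_rep :: "('x::ab_group_add \<Rightarrow> bit) \<Rightarrow> 'w set \<Rightarrow> ('v \<Rightarrow> 'x) \<Rightarrow> ('w \<Rightarrow> 'x) \<Rightarrow> 'v \<Rightarrow> 'w" where
  "eps_rep qX W f g = proj_g qX W g \<circ> f"

end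

theory Submission
  imports Defs
begin

lemma bit_self[simp]: "(a::bit) + a = 0" by (cases a) auto
lemma bit_self2[simp]: "(a::bit) + (a + b) = b" by (cases a; cases b) auto
lemma test: "(a::bit) + b + c + a + d + c = d + b" by (simp add: add_ac del: add_bit_eq_xor)

lemma polar_sym: "polar q x y = polar q y x"
  by (simp add: polar_def add_ac del: add_bit_eq_xor)

lemma add_self_zero:
  fixes x :: "'a::ab_group_add"
  assumes "x + x = x" shows "x = 0"
  using assms by (metis add_cancel_right_right)

lemma qs_facts:
  assumes "quad_space S q"
  shows "0 \<in> S" "finite S" "\<And>x y. x\<in>S \<Longrightarrow> y\<in>S \<Longrightarrow> x+y\<in>S"
    "\<And>x. x\<in>S \<Longrightarrow> x+x=0" "\<And>x. x\<in>S \<Longrightarrow> -x = x"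
    "\<And>x y z. x\<in>S \<Longrightarrow> y\<in>S \<Longrightarrow> z\<in>S \<Longrightarrow> polar q (x + y) z = polar q x z + polar q y z"
    "\<And>x y z. x\<in>S \<Longrightarrow> y\<in>S \<Longrightarrow> z\<in>S \<Longrightarrow> polar q x (y + z) = polar q x y + polar q x z"
    "\<And>x. x\<in>S \<Longrightarrow> (\<forall>y\<in>S. polar q x y = 0) \<Longrightarrow> x = 0"
    "q 0 = 0"
proof -
  show S0: "0 \<in> S" "finite S" "\<And>x y. x\<in>S \<Longrightarrow> y\<in>S \<Longrightarrow> x+y\<in>S"
    "\<And>x. x\<in>S \<Longrightarrow> x+x=0"
    "\<And>x y z. x\<in>S \<Longrightarrow> y\<in>S \<Longrightarrow> z\<in>S \<Longrightarrow> polar q (x + y) z = polar q x z + polar q y z"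
    "\<And>x y z. x\<in>S \<Longrightarrow> y\<in>S \<Longrightarrow> z\<in>S \<Longrightarrow> polar q x (y + z) = polar q x y + polar q x z"
    "\<And>x. x\<in>S \<Longrightarrow> (\<forall>y\<in>S. polar q x y = 0) \<Longrightarrow> x = 0"
    using assms unfolding quad_space_def quadratic_form_def f2space_def nondegenerate_def by blast+
  show "\<And>x. x\<in>S \<Longrightarrow> -x = x" using S0(4) by (metis minus_unique)
  have "polar q (0+0) 0 = polar q 0 0 + polar q 0 0" using S0 by blast
  then show "q 0 = 0" by (simp add: polar_def)
qed

lemma polar_zero1: "q 0 = 0 \<Longrightarrow> polar q 0 x = 0" by (simp add: polar_def)
lemma polar_zero2: "q 0 = 0 \<Longrightarrow> polar q x 0 = 0" by (simp add: polar_def)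

lemma transfer_quad:
  fixes enc :: "'a::ab_group_add \<Rightarrow> 'b::ab_group_add"
  assumes Q: "quad_space A qA"
    and add: "\<And>a b. a\<in>A \<Longrightarrow> b\<in>A \<Longrightarrow> enc (a+b) = enc a + enc b"
    and inj: "inj_on enc A"
  shows "quad_space (enc ` A) (qA \<circ> inv_into A enc)" "enc 0 = 0"
    "(qA \<circ> inv_into A enc) 0 = 0"
proof -
  note F = qs_facts[OF Q]
  have e0: "enc 0 = 0" using add[OF F(1) F(1)] by (simp add: add_self_zero)
  then show "enc 0 = 0" .
  have Qe: "(qA \<circ> inv_into A enc) (enc a) = qA a" if "a \<in> A" for a
    using inj that by simp
  have Pe: "polar (qA \<circ> inv_into A enc) (enc a) (enc b) = polar qA a b" if "a\<in>A" "b\<in>A" for a b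
    using that by (simp add: polar_def Qe F(3) add[symmetric] del: comp_apply)
  show "(qA \<circ> inv_into A enc) 0 = 0" using Qe[OF F(1)] e0 F(9) by simp
  show "quad_space (enc ` A) (qA \<circ> inv_into A enc)"
    unfolding quad_space_def quadratic_form_def f2space_def nondegenerate_def
  proof (intro conjI ballI impI)
    show "0 \<in> enc ` A" using e0 F(1) by force
    show "finite (enc ` A)" using F(2) by simp
    fix x y assume "x \<in> enc ` A" "y \<in> enc ` A"
    then obtain a b where ab: "a\<in>A" "b\<in>A" "x = enc a" "y = enc b" by blast
    show "x + y \<in> enc ` A" using ab add F(3) by (metis image_eqI)
  next
    fix x assume "x \<in> enc ` A"
    then obtain a where ab: "a\<in>A" "x = enc a" by blast
    show "x + x = 0" using ab add[of a a] F(4) e0 by simp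
  next
    fix x y z assume "x \<in> enc ` A" "y \<in> enc ` A" "z \<in> enc ` A"
    then obtain a b c where ab: "a\<in>A" "b\<in>A" "c\<in>A" "x = enc a" "y = enc b" "z = enc c" by blast
    show "polar (qA \<circ> inv_into A enc) (x + y) z =
       polar (qA \<circ> inv_into A enc) x z + polar (qA \<circ> inv_into A enc) y z"
      using ab by (simp add: add[symmetric] Pe F(3) F(6) del: comp_apply)
    show "polar (qA \<circ> inv_into A enc) x (y + z) =
       polar (qA \<circ> inv_into A enc) x y + polar (qA \<circ> inv_into A enc) x z"
      using ab by (simp add: add[symmetric] Pe F(3) F(7) del: comp_apply)
  next
    fix x assume x: "x \<in> enc ` A" and H: "\<forall>y\<in>enc ` A. polar (qA \<circ> inv_into A enc) x y = 0"
    then obtain a where ab: "a\<in>A" "x = enc a" by blast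
    have "\<forall>b\<in>A. polar qA a b = 0" using H ab Pe by (metis image_eqI)
    then have "a = 0" using F(8) ab by blast
    then show "x = 0" using ab e0 by simp
  qed
qed

declare add_bit_eq_xor[simp del]

theorem mainTheorem2:
  fixes V :: "'v::ab_group_add set" and qV :: "'v \<Rightarrow> bit"
    and W :: "'w::ab_group_add set" and qW :: "'w \<Rightarrow> bit"
    and f :: "'v \<Rightarrow> 'w"
  assumes "quad_space V qV" and "quad_space W qW" and "f2linear V W f"
  shows "\<exists>(Y :: (nat \<Rightarrow> bit) set) (qY :: (nat \<Rightarrow> bit) \<Rightarrow> bit) (\<phi> :: 'v \<Rightarrow> 'w \<times> (nat \<Rightarrow> bit)).
           quad_space Y qY \<and>
           Eq_morphism V qV (W \<times> Y) (orth_form qW qY) \<phi> \<and>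
           Eq_morphism W qW (W \<times> Y) (orth_form qW qY) (\<lambda>w. (w, 0)) \<and>
           (\<forall>v\<in>V. eps_rep (orth_form qW qY) W \<phi> (\<lambda>w. (w, 0)) v = f v)"
proof -
  note FV = qs_facts[OF assms(1)]
  note FW = qs_facts[OF assms(2)]
  have fW: "\<And>x. x\<in>V \<Longrightarrow> f x \<in> W" and fadd: "\<And>x y. x\<in>V \<Longrightarrow> y\<in>V \<Longrightarrow> f (x+y) = f x + f y"
    using assms(3) unfolding f2linear_def by blast+
  have f0: "f 0 = 0" using fadd[OF FV(1) FV(1)] by (simp add: add_self_zero)
  obtain N :: nat and g :: "nat \<Rightarrow> 'v" where Ng: "V = g ` {i. i < N}"
    using finite_imp_nat_seg_image_inj_on[OF FV(2)] by blast
  define xs where "xs n = (if n < N then g n else 0)" for n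
  have xsV: "xs n \<in> V" for n using Ng FV(1) by (auto simp: xs_def)
  have xsS: "\<exists>n. xs n = y" if "y \<in> V" for y using that Ng by (force simp: xs_def)
  define e where "e v = (\<lambda>n. polar qV v (xs n))" for v
  define enc :: "'v \<times> 'v \<Rightarrow> nat \<Rightarrow> bit" where
    "enc p = (\<lambda>n. if even n then e (fst p) (n div 2) else e (snd p) (n div 2))" for p
  define d where "d v = qV v + qW (f v)" for v
  define qA where "qA p = d (fst p) + polar qV (fst p) (snd p)" for p
  have eadd: "e (a + b) = e a + e b" if "a\<in>V" "b\<in>V" for a b
    using that by (auto simp: e_def FV(6) xsV)
  have einj: "a = b" if "a\<in>V" "b\<in>V" "e a = e b" for a b
  proof -
    have "\<forall>y\<in>V. polar qV (a + b) y = 0"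
    proof
      fix y assume "y \<in> V"
      then obtain n where "xs n = y" using xsS by blast
      then have 1: "polar qV a y = polar qV b y" using that(3) unfolding e_def by metis
      have "polar qV (a + b) y = polar qV a y + polar qV b y" using FV(6) that(1,2) \<open>y\<in>V\<close> by blast
      then show "polar qV (a + b) y = 0" using 1 by simp
    qed
    moreover have "a + b \<in> V" using FV(3) that(1,2) by blast
    ultimately have "a + b = 0" using FV(8) by blast
    then have "- a = b" by (rule minus_unique)
    then show ?thesis using FV(5)[OF that(1)] by simp
  qed
  have encadd: "enc (a + b) = enc a + enc b" if "a\<in>V\<times>V" "b\<in>V\<times>V" for a b
    using that by (auto simp: enc_def eadd fun_eq_iff)
  have encinj: "inj_on enc (V \<times> V)"
  proof (rule inj_onI)
    fix a b assume ab: "a \<in> V \<times> V" "b \<in> V \<times> V" "enc a = enc b"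
    have "e (fst a) n = e (fst b) n" for n using fun_cong[OF ab(3), of "2*n"] by (simp add: enc_def)
    then have 1: "fst a = fst b" using einj[of "fst a" "fst b"] ab by (auto simp: fun_eq_iff)
    have "e (snd a) n = e (snd b) n" for n using fun_cong[OF ab(3), of "2*n+1"] by (simp add: enc_def)
    then have 2: "snd a = snd b" using einj[of "snd a" "snd b"] ab by (auto simp: fun_eq_iff)
    show "a = b" using 1 2 by (simp add: prod_eq_iff)
  qed
  have PA: "polar qA (v,w) (v',w') = polar qV v v' + polar qW (f v) (f v') + polar qV v w' + polar qV v' w"
    if "v\<in>V" "w\<in>V" "v'\<in>V" "w'\<in>V" for v w v' w'
  proof -
    have H: "polar qV (v+v') (w+w') = polar qV v w + polar qV v w' + polar qV v' w + polar qV v' w'"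
      using that by (simp add: FV(3) FV(6) FV(7) add_ac)
    show ?thesis
      unfolding polar_def[of qA] polar_def[of qV v v'] polar_def[of qW "f v" "f v'"]
      apply (simp only: qA_def d_def fst_conv snd_conv add_Pair fadd[OF that(1) that(3)] H)
      by (simp add: add_ac)
  qed
  have QA: "quad_space (V \<times> V) qA"
    unfolding quad_space_def quadratic_form_def f2space_def nondegenerate_def
  proof (intro conjI ballI impI)
    show "0 \<in> V \<times> V" using FV(1) by (simp add: zero_prod_def)
    show "finite (V \<times> V)" using FV(2) by simp
    fix x y assume "x \<in> V \<times> V" "y \<in> V \<times> V"
    then show "x + y \<in> V \<times> V" using FV(3) by (auto simp: mem_Times_iff)
  next
    fix x assume "x \<in> V \<times> V"
    then show "x + x = 0" using FV(4) by (auto simp: mem_Times_iff prod_eq_iff)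
  next
    fix x y z assume xyz: "x \<in> V \<times> V" "y \<in> V \<times> V" "z \<in> V \<times> V"
    obtain a b where x: "x = (a,b)" by fastforce
    obtain a' b' where y: "y = (a',b')" by fastforce
    obtain a'' b'' where z: "z = (a'',b'')" by fastforce
    have m: "a\<in>V" "b\<in>V" "a'\<in>V" "b'\<in>V" "a''\<in>V" "b''\<in>V" using xyz x y z by auto
    have fm: "f a \<in> W" "f a' \<in> W" "f a'' \<in> W" using m fW by auto
    show "polar qA (x + y) z = polar qA x z + polar qA y z"
      unfolding x y z using m fm
      by (simp add: PA FV(3) FV(6) FV(7) FW(6) fadd add_ac)
    show "polar qA x (y + z) = polar qA x y + polar qA x z"
      unfolding x y z using m fm
      by (simp add: PA FV(3) FV(6) FV(7) FW(7) fadd add_ac)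
  next
    fix x assume x: "x \<in> V \<times> V" and H: "\<forall>y\<in>V \<times> V. polar qA x y = 0"
    obtain a b where xe: "x = (a,b)" by fastforce
    have m: "a \<in> V" "b \<in> V" using x xe by auto
    have "polar qA (a,b) (0,w') = polar qV a w'" if "w' \<in> V" for w'
      using m that FV(1) by (simp add: PA f0 polar_zero1 polar_zero2 FV(9) FW(9))
    then have "\<forall>w'\<in>V. polar qV a w' = 0" using H xe FV(1) by auto
    then have a0: "a = 0" using FV(8) m by blast
    have "polar qA (0,b) (v',0) = polar qV b v'" if "v' \<in> V" for v'
      using m that FV(1) by (simp add: PA f0 polar_zero1 polar_zero2 FV(9) FW(9) polar_sym)
    then have "\<forall>v'\<in>V. polar qV b v' = 0" using H xe a0 FV(1) by auto
    then have "b = 0" using FV(8) m by blast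
    then show "x = 0" using xe a0 by (simp add: zero_prod_def)
  qed
  have T: "quad_space (enc ` (V \<times> V)) (qA \<circ> inv_into (V \<times> V) enc)" "enc 0 = 0"
    "(qA \<circ> inv_into (V \<times> V) enc) 0 = 0"
    using transfer_quad[of "V \<times> V" qA enc] QA encadd encinj by blast+
  define Y where "Y = enc ` (V \<times> V)"
  define qY where "qY = qA \<circ> inv_into (V \<times> V) enc"
  define \<phi> where "\<phi> v = (f v, enc (v, 0))" for v
  have QY: "quad_space Y qY" using T(1) by (simp add: Y_def qY_def)
  have qY0: "qY 0 = 0" using T(3) by (simp add: qY_def)
  have qYe: "qY (enc p) = qA p" if "p \<in> V \<times> V" for p
    using that encinj by (simp add: qY_def)
  have 00: "(0::'v\<times>'v) \<in> V \<times> V" using FV(1) by (simp add: zero_prod_def)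
  have Y0: "0 \<in> Y" unfolding Y_def using 00 T(2) by (metis image_eqI)
  have polar_orth: "polar (orth_form qW qY) (a, b) (u, 0) = polar qW a u" for a b u
    by (simp add: polar_def orth_form_def qY0 add_ac)
  show ?thesis
  proof (intro exI conjI)
    show "quad_space Y qY" by (rule QY)
    show "Eq_morphism V qV (W \<times> Y) (orth_form qW qY) \<phi>"
      unfolding Eq_morphism_def f2linear_def
    proof (intro conjI ballI)
      fix x assume x: "x \<in> V"
      show "\<phi> x \<in> W \<times> Y" using x fW FV(1) by (auto simp: \<phi>_def Y_def)
      show "orth_form qW qY (\<phi> x) = qV x"
        using x FV(1) by (simp add: \<phi>_def orth_form_def qYe qA_def d_def polar_zero2 FV(9))
      fix y assume y: "y \<in> V"
      show "\<phi> (x + y) = \<phi> x + \<phi> y"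
        using x y FV(1) encadd[of "(x,0)" "(y,0)"] by (simp add: \<phi>_def fadd)
    qed
    show "Eq_morphism W qW (W \<times> Y) (orth_form qW qY) (\<lambda>w. (w, 0))"
      unfolding Eq_morphism_def f2linear_def using Y0 by (simp add: orth_form_def qY0)
    show "\<forall>v\<in>V. eps_rep (orth_form qW qY) W \<phi> (\<lambda>w. (w, 0)) v = f v"
    proof
      fix v assume v: "v \<in> V"
      have "proj_g (orth_form qW qY) W (\<lambda>w. (w, 0)) (\<phi> v) = f v"
        unfolding proj_g_def
      proof (rule the_equality)
        show "f v \<in> W \<and> (\<forall>u\<in>W. polar (orth_form qW qY) (\<phi> v - (f v, 0)) (u, 0) = 0)"
          using v fW by (simp add: \<phi>_def polar_orth polar_zero1 FW(9))
        fix w assume w: "w \<in> W \<and> (\<forall>u\<in>W. polar (orth_form qW qY) (\<phi> v - (w, 0)) (u, 0) = 0)"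
        have "f v - w = f v + w" using w FW(5) by (metis diff_conv_add_uminus)
        moreover have "f v + w \<in> W" using w v fW FW(3) by blast
        ultimately have m: "f v - w \<in> W" by metis
        have "\<forall>u\<in>W. polar qW (f v - w) u = 0" using w by (simp add: \<phi>_def polar_orth)
        then have "f v - w = 0" using m FW(8) by blast
        then show "w = f v" by simp
      qed
      then show "eps_rep (orth_form qW qY) W \<phi> (\<lambda>w. (w, 0)) v = f v"
        by (simp add: eps_rep_def)
    qed
  qed
qed

end
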